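(* Let $G=(V,E)$ be a 3-connected, transient, simple planar graph with bounded vertex degree and locally finite dual that is circle packed in $\mathbb{H}^2$, and let $\mathcal{A}$ be a nonempty proper closed subset of $\partial\mathbb{H}^2$. If $f\in\mathbf{HD}(G)$ and $f\in\mathcal{R}_{\mathcal{A}}$, then for almost every singly infinite path $(\gamma(n))_{n\ge0}$ with $\lim_{n\to\infty}d_m(\gamma(n),z)=0$ for some $z\in\mathcal A$, we have $\lim_{n\to\infty}f(\gamma(n))=0$.
   Context: Circle packing: vertices are the Euclidean centers of circles of a packing of the unit disk with tangency graph $G$, $r_v$ the radius; $m(e)=r_u+r_v$; $d_m$ its path metric; topological notions near $\partial\mathbb{H}^2$ with respect to $d_m$ (in its completion). Conductances $C:E\to(0,\infty)$. A function $F$ is harmonic if $F(v)=\sum_{e=(v,w)}C(e)F(w)/\sum_{e\ni v}C(e)$, Dirichlet if $\sum_{e=(u,v)}C(e)(F(u)-F(v))^2<\infty$; $\mathbf D(G)$, $\mathbf{HD}(G)$ are the Dirichlet and harmonic Dirichlet functions. With the norm $\|u\|=\sqrt{\mathcal E(\nabla u)+u(b_0)^2}$ ($b_0$ a fixed vertex), $\mathcal R_{\mathcal A}=\mathbf{HD}(G)\cap\overline{\mathcal T}$ where $\overline{\mathcal T}$ is the closure of the set of $f\in\mathbf D(G)$ such that every $z\in\mathcal A$ has an open neighborhood $U_z$ with $\mathrm{supp}f\cap U_z=\emptyset$. A family of paths is null if some $q:E\to(0,\infty)$ with $\sum_eC(e)q(e)^2<\infty$ gives each of its paths infinite $q$-length;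 "almost every path" means outside a null subfamily. *)

theory Defs
  imports "HOL-Analysis.Analysis" "HOL-Library.Extended_Real"
begin

text \<open>Graphs: vertices are the elements of a type 'v, adjacency is a relation E.
  Edges are unordered; sums over edges are taken over ordered pairs and halved.\<close>

definition sym_irrefl :: "('v \<Rightarrow> 'v \<Rightarrow> bool) \<Rightarrow> bool" where
  "sym_irrefl E \<longleftrightarrow> (\<forall>u v. E u v \<longrightarrow> E v u) \<and> (\<forall>v. \<not> E v v)"

definition walk_list :: "('v \<Rightarrow> 'v \<Rightarrow> bool) \<Rightarrow> 'v list \<Rightarrow> bool" where
  "walk_list E p \<longleftrightarrow> p \<noteq> [] \<and> (\<forall>i. Suc i < length p \<longrightarrow> E (p!i) (p!Suc i))"

definition connected_in :: "('v \<Rightarrow> 'v \<Rightarrow> bool) \<Rightarrow> 'v set \<Rightarrow> bool" where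
  "connected_in E S \<longleftrightarrow>
     (\<forall>u\<in>S. \<forall>v\<in>S. \<exists>p. walk_list E p \<and> hd p = u \<and> last p = v \<and> set p \<subseteq> S)"

definition three_connected :: "('v \<Rightarrow> 'v \<Rightarrow> bool) \<Rightarrow> bool" where
  "three_connected E \<longleftrightarrow> (\<exists>S::'v set. finite S \<and> card S \<ge> 4) \<and>
     (\<forall>X::'v set. finite X \<and> card X \<le> 2 \<longrightarrow> connected_in E (UNIV - X))"

definition bounded_degree :: "('v \<Rightarrow> 'v \<Rightarrow> bool) \<Rightarrow> bool" where
  "bounded_degree E \<longleftrightarrow> (\<exists>M::nat. \<forall>v. finite {w. E v w} \<and> card {w. E v w} \<le> M)"

definition conductance :: "('v \<Rightarrow> 'v \<Rightarrow> real) \<Rightarrow> ('v \<Rightarrow> 'v \<Rightarrow> bool) \<Rightarrow> bool" where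
  "conductance C E \<longleftrightarrow> (\<forall>u v. E u v \<longrightarrow> C u v > 0 \<and> C u v = C v u)"

definition energy :: "('v \<Rightarrow> 'v \<Rightarrow> real) \<Rightarrow> ('v \<Rightarrow> 'v \<Rightarrow> bool) \<Rightarrow> ('v \<Rightarrow> real) \<Rightarrow> ennreal" where
  "energy C E F = (\<Sum>\<^sub>\<infinity>(u,v)\<in>{(u,v). E u v}. ennreal (C u v * (F u - F v)^2)) / 2"

definition dirichlet :: "('v \<Rightarrow> 'v \<Rightarrow> real) \<Rightarrow> ('v \<Rightarrow> 'v \<Rightarrow> bool) \<Rightarrow> ('v \<Rightarrow> real) \<Rightarrow> bool" where
  "dirichlet C E F \<longleftrightarrow> energy C E F < top"

definition harmonic :: "('v \<Rightarrow> 'v \<Rightarrow> real) \<Rightarrow> ('v \<Rightarrow> 'v \<Rightarrow> bool) \<Rightarrow> ('v \<Rightarrow> real) \<Rightarrow> bool" where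
  "harmonic C E F \<longleftrightarrow>
     (\<forall>v. F v = (\<Sum>w\<in>{w. E v w}. C v w * F w) / (\<Sum>w\<in>{w. E v w}. C v w))"

definition HD :: "('v \<Rightarrow> 'v \<Rightarrow> real) \<Rightarrow> ('v \<Rightarrow> 'v \<Rightarrow> bool) \<Rightarrow> ('v \<Rightarrow> real) set" where
  "HD C E = {F. harmonic C E F \<and> dirichlet C E F}"

definition dnorm :: "('v \<Rightarrow> 'v \<Rightarrow> real) \<Rightarrow> ('v \<Rightarrow> 'v \<Rightarrow> bool) \<Rightarrow> 'v \<Rightarrow> ('v \<Rightarrow> real) \<Rightarrow> real" where
  "dnorm C E b0 F = sqrt (enn2real (energy C E F) + (F b0)^2)"

text \<open>Transience of the network (G,C): the capacity of b0 is positive.\<close>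
definition transient :: "('v \<Rightarrow> 'v \<Rightarrow> real) \<Rightarrow> ('v \<Rightarrow> 'v \<Rightarrow> bool) \<Rightarrow> 'v \<Rightarrow> bool" where
  "transient C E b0 \<longleftrightarrow> (\<exists>\<delta>>0. \<forall>F. finite {v. F v \<noteq> 0} \<and> F b0 = 1 \<longrightarrow> energy C E F \<ge> ennreal \<delta>)"

definition edge_set :: "('v \<Rightarrow> 'v \<Rightarrow> bool) \<Rightarrow> ('v \<Rightarrow> complex) \<Rightarrow> complex set" where
  "edge_set E c = \<Union>{closed_segment (c u) (c v) | u v. E u v}"

text \<open>Circle packing of the unit disk (carrier = the whole disk) with tangency graph E.\<close>
definition circle_packing_disk ::
  "('v \<Rightarrow> 'v \<Rightarrow> bool) \<Rightarrow> ('v \<Rightarrow> complex) \<Rightarrow> ('v \<Rightarrow> real) \<Rightarrow> bool" where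
  "circle_packing_disk E c r \<longleftrightarrow>
     (\<forall>v. r v > 0 \<and> cball (c v) (r v) \<subseteq> ball 0 1) \<and>
     (\<forall>u v. u \<noteq> v \<longrightarrow> ball (c u) (r u) \<inter> ball (c v) (r v) = {}) \<and>
     (\<forall>u v. E u v \<longleftrightarrow> u \<noteq> v \<and> dist (c u) (c v) = r u + r v) \<and>
     (\<forall>K. compact K \<and> K \<subseteq> ball 0 1 \<longrightarrow> finite {v. cball (c v) (r v) \<inter> K \<noteq> {}}) \<and>
     (\<forall>F\<in>components (ball 0 1 - edge_set E c). compact (closure F) \<and> closure F \<subseteq> ball 0 1)"

definition locally_finite_dual :: "('v \<Rightarrow> 'v \<Rightarrow> bool) \<Rightarrow> ('v \<Rightarrow> complex) \<Rightarrow> bool" where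
  "locally_finite_dual E c \<longleftrightarrow>
     (\<forall>F\<in>components (ball 0 1 - edge_set E c). \<exists>S. finite S \<and> S \<subseteq> {(u,v). E u v} \<and>
        frontier F \<subseteq> \<Union>{closed_segment (c u) (c v) | u v. (u,v) \<in> S})"

definition path_len :: "('v \<Rightarrow> real) \<Rightarrow> 'v list \<Rightarrow> real" where
  "path_len r p = (\<Sum>i<length p - 1. r (p!i) + r (p!Suc i))"

definition dm :: "('v \<Rightarrow> 'v \<Rightarrow> bool) \<Rightarrow> ('v \<Rightarrow> real) \<Rightarrow> 'v \<Rightarrow> 'v \<Rightarrow> real" where
  "dm E r u v = Inf {path_len r p | p. walk_list E p \<and> hd p = u \<and> last p = v}"

definition dm_cauchy :: "('v \<Rightarrow> 'v \<Rightarrow> bool) \<Rightarrow> ('v \<Rightarrow> real) \<Rightarrow> (nat \<Rightarrow> 'v) \<Rightarrow> bool" where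
  "dm_cauchy E r x \<longleftrightarrow> (\<forall>\<epsilon>>0. \<exists>N. \<forall>m\<ge>N. \<forall>n\<ge>N. dm E r (x m) (x n) < \<epsilon>)"

text \<open>Distance, in the completion of (V,d_m), from a vertex to the boundary point z:
  a point z of the unit circle is the limit of those d_m-Cauchy sequences whose
  centers converge (Euclidean) to z.\<close>
definition dm_bd :: "('v \<Rightarrow> 'v \<Rightarrow> bool) \<Rightarrow> ('v \<Rightarrow> complex) \<Rightarrow> ('v \<Rightarrow> real) \<Rightarrow> 'v \<Rightarrow> complex \<Rightarrow> ereal" where
  "dm_bd E c r v z = Inf {ereal l | l. \<exists>x. dm_cauchy E r x \<and> ((\<lambda>n. c (x n)) \<longlonglongrightarrow> z) \<and>
                                        ((\<lambda>n. dm E r v (x n)) \<longlonglongrightarrow> l)}"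

definition away_from ::
  "('v \<Rightarrow> 'v \<Rightarrow> bool) \<Rightarrow> ('v \<Rightarrow> complex) \<Rightarrow> ('v \<Rightarrow> real) \<Rightarrow> complex set \<Rightarrow> ('v \<Rightarrow> real) \<Rightarrow> bool" where
  "away_from E c r A f \<longleftrightarrow> (\<forall>z\<in>A. \<exists>\<epsilon>>0. \<forall>v. dm_bd E c r v z < ereal \<epsilon> \<longrightarrow> f v = 0)"

definition R_A ::
  "('v \<Rightarrow> 'v \<Rightarrow> real) \<Rightarrow> ('v \<Rightarrow> 'v \<Rightarrow> bool) \<Rightarrow> ('v \<Rightarrow> complex) \<Rightarrow> ('v \<Rightarrow> real) \<Rightarrow> 'v \<Rightarrow>
   complex set \<Rightarrow> ('v \<Rightarrow> real) set" where
  "R_A C E c r b0 A = HD C E \<inter>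
     {f. dirichlet C E f \<and> (\<forall>\<epsilon>>0. \<exists>g. dirichlet C E g \<and> away_from E c r A g \<and>
                                       dnorm C E b0 (\<lambda>v. f v - g v) < \<epsilon>)}"

definition inf_path :: "('v \<Rightarrow> 'v \<Rightarrow> bool) \<Rightarrow> (nat \<Rightarrow> 'v) \<Rightarrow> bool" where
  "inf_path E \<gamma> \<longleftrightarrow> inj \<gamma> \<and> (\<forall>n. E (\<gamma> n) (\<gamma> (Suc n)))"

definition null_family ::
  "('v \<Rightarrow> 'v \<Rightarrow> real) \<Rightarrow> ('v \<Rightarrow> 'v \<Rightarrow> bool) \<Rightarrow> (nat \<Rightarrow> 'v) set \<Rightarrow> bool" where
  "null_family C E P \<longleftrightarrow> (\<exists>q. (\<forall>u v. E u v \<longrightarrow> q u v > 0 \<and> q u v = q v u) \<and>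
     (\<Sum>\<^sub>\<infinity>(u,v)\<in>{(u,v). E u v}. ennreal (C u v * (q u v)^2)) < top \<and>
     (\<forall>\<gamma>\<in>P. \<not> summable (\<lambda>n. q (\<gamma> n) (\<gamma> (Suc n)))))"

end

theory Submission
  imports Defs
begin


lemma enn_sum_le_infsum:
  fixes f :: "'a \<Rightarrow> ennreal"
  assumes "finite F" "F \<subseteq> A" shows "sum f F \<le> infsum f A"
  by (subst nonneg_infsum_complete) (use assms in \<open>auto intro!: SUP_upper\<close>)

lemma enn_infsum_le:
  fixes f :: "'a \<Rightarrow> ennreal"
  assumes "\<And>F. finite F \<Longrightarrow> F \<subseteq> A \<Longrightarrow> sum f F \<le> B" shows "infsum f A \<le> B"
  by (subst nonneg_infsum_complete) (use assms in \<open>auto intro!: SUP_least\<close>)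

lemma energy_twice: "(\<Sum>\<^sub>\<infinity>(u,v)\<in>{(u,v). E u v}. ennreal (C u v * (F u - F v)^2)) = 2 * energy C E F"
proof -
  have "\<And>x::ennreal. 2 * (x / 2) = x"
  proof -
    fix x :: ennreal
    have "2 * (x/2) = x * 2 / 2" by (simp add: ennreal_times_divide mult.commute)
    also have "\<dots> = x" by (rule ennreal_mult_divide_eq) auto
    finally show "2 * (x / 2) = x" .
  qed
  then show ?thesis unfolding energy_def by simp
qed

lemma finite_energy_bound:
  assumes "dirichlet C E d" "conductance C E" "finite F" "F \<subseteq> {(u,v). E u v}"
  shows "(\<Sum>(u,v)\<in>F. C u v * (d u - d v)^2) \<le> 2 * enn2real (energy C E d)"
proof -
  have nn: "\<And>e. e \<in> F \<Longrightarrow> 0 \<le> (case e of (u,v) \<Rightarrow> C u v * (d u - d v)^2)"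
  proof -
    fix e assume "e \<in> F"
    then obtain u v where "e = (u,v)" "E u v" using assms(4) by auto
    then have "C u v > 0" using assms(2) unfolding conductance_def by auto
    then show "0 \<le> (case e of (u,v) \<Rightarrow> C u v * (d u - d v)^2)" using \<open>e = (u,v)\<close> by simp
  qed
  have "ennreal (\<Sum>(u,v)\<in>F. C u v * (d u - d v)^2) = (\<Sum>e\<in>F. ennreal (case e of (u,v) \<Rightarrow> C u v * (d u - d v)^2))"
    using nn by (subst sum_ennreal[symmetric]) (auto simp: case_prod_beta)
  also have "\<dots> = (\<Sum>(u,v)\<in>F. ennreal (C u v * (d u - d v)^2))"
    by (simp add: case_prod_beta)
  also have "\<dots> \<le> 2 * energy C E d"
    unfolding energy_twice[symmetric] by (rule enn_sum_le_infsum[OF assms(3,4)])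
  also have "\<dots> = ennreal (2 * enn2real (energy C E d))"
    using assms(1) unfolding dirichlet_def
    by (simp add: ennreal_mult ennreal_enn2real_if)
  finally show ?thesis by (subst (asm) ennreal_le_iff) auto
qed

lemma telescope_bound:
  fixes d :: "'v \<Rightarrow> real"
  assumes "\<And>i. i < m \<Longrightarrow> \<bar>d (x (Suc i)) - d (x i)\<bar> \<le> a i"
  shows "\<bar>d (x m) - d (x 0)\<bar> \<le> (\<Sum>i<m. a i)"
  using assms
proof (induction m)
  case 0 then show ?case by simp
next
  case (Suc m)
  have "\<bar>d (x (Suc m)) - d (x 0)\<bar> \<le> \<bar>d (x (Suc m)) - d (x m)\<bar> + \<bar>d (x m) - d (x 0)\<bar>" by linarith
  also have "\<dots> \<le> a m + (\<Sum>i<m. a i)" using Suc by (intro add_mono) auto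
  finally show ?case by simp
qed

lemma sq_diff_le: "((a::real) - b)^2 \<le> 2*a^2 + 2*b^2"
proof -
  have "(a-b)^2 + (a+b)^2 = 2*a^2 + 2*b^2" by (simp add: power2_diff power2_sum)
  then show ?thesis using zero_le_power2[of "a+b"] by linarith
qed

lemma dirichlet_diff:
  assumes "dirichlet C E f" "dirichlet C E g" "conductance C E"
  shows "dirichlet C E (\<lambda>v. f v - g v)"
proof -
  let ?S = "\<lambda>h. (\<Sum>\<^sub>\<infinity>(u,v)\<in>{(u,v). E u v}. ennreal (C u v * (h u - h v)^2))"
  have "?S (\<lambda>v. f v - g v) \<le> 2 * ?S f + 2 * ?S g"
  proof (rule enn_infsum_le)
    fix F assume F: "finite F" "F \<subseteq> {(u,v). E u v}"
    have pos: "\<And>u v. (u,v) \<in> F \<Longrightarrow> C u v > 0" using F assms(3) unfolding conductance_def by auto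
    have "(\<Sum>(u,v)\<in>F. ennreal (C u v * ((f u - g u) - (f v - g v))^2))
       \<le> (\<Sum>(u,v)\<in>F. 2 * ennreal (C u v * (f u - f v)^2) + 2 * ennreal (C u v * (g u - g v)^2))"
    proof (rule sum_mono)
      fix e assume e: "e \<in> F"
      obtain u v where uv: "e = (u,v)" by fastforce
      have Cp: "C u v > 0" using pos e uv by auto
      have "((f u - g u) - (f v - g v))^2 \<le> 2*(f u - f v)^2 + 2*(g u - g v)^2"
      proof -
        have eq: "(f u - g u) - (f v - g v) = (f u - f v) - (g u - g v)" by simp
        show ?thesis unfolding eq by (rule sq_diff_le)
      qed
      hence "C u v * ((f u - g u) - (f v - g v))^2 \<le> 2 * (C u v * (f u - f v)^2) + 2 * (C u v * (g u - g v)^2)"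
      proof -
        have "C u v * ((f u - g u) - (f v - g v))^2 \<le> C u v * (2*(f u - f v)^2 + 2*(g u - g v)^2)"
          using Cp \<open>((f u - g u) - (f v - g v))^2 \<le> 2*(f u - f v)^2 + 2*(g u - g v)^2\<close>
          by (intro mult_left_mono) auto
        moreover have "C u v * (2*(f u - f v)^2 + 2*(g u - g v)^2) = 2 * (C u v * (f u - f v)^2) + 2 * (C u v * (g u - g v)^2)"
          by (simp only: distrib_left mult.left_commute)
        ultimately show ?thesis by linarith
      qed
      hence "ennreal (C u v * ((f u - g u) - (f v - g v))^2) \<le> ennreal (2 * (C u v * (f u - f v)^2) + 2 * (C u v * (g u - g v)^2))"
        by (rule ennreal_leI)
      also have "\<dots> = 2 * ennreal (C u v * (f u - f v)^2) + 2 * ennreal (C u v * (g u - g v)^2)"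
      proof -
        have X0: "0 \<le> 2 * (C u v * (f u - f v)^2)" and Y0: "0 \<le> 2 * (C u v * (g u - g v)^2)"
          using Cp by auto
        have "ennreal (2 * (C u v * (f u - f v)^2) + 2 * (C u v * (g u - g v)^2))
            = ennreal (2 * (C u v * (f u - f v)^2)) + ennreal (2 * (C u v * (g u - g v)^2))"
          by (rule ennreal_plus[OF X0 Y0])
        also have "\<dots> = 2 * ennreal (C u v * (f u - f v)^2) + 2 * ennreal (C u v * (g u - g v)^2)"
          by (simp only: ennreal_mult'[of 2] ennreal_numeral)
        finally show ?thesis .
      qed
      finally show "(case e of (u,v) \<Rightarrow> ennreal (C u v * ((f u - g u) - (f v - g v))^2))
          \<le> (case e of (u,v) \<Rightarrow> 2 * ennreal (C u v * (f u - f v)^2) + 2 * ennreal (C u v * (g u - g v)^2))"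
        using uv by simp
    qed
    also have "\<dots> = 2 * (\<Sum>(u,v)\<in>F. ennreal (C u v * (f u - f v)^2)) + 2 * (\<Sum>(u,v)\<in>F. ennreal (C u v * (g u - g v)^2))"
      by (simp add: sum.distrib sum_distrib_left case_prod_beta)
    also have "\<dots> \<le> 2 * ?S f + 2 * ?S g"
      by (intro add_mono mult_left_mono enn_sum_le_infsum F) auto
    finally show "(\<Sum>(u,v)\<in>F. ennreal (C u v * ((f u - g u) - (f v - g v))^2)) \<le> 2 * ?S f + 2 * ?S g" .
  qed
  also have "\<dots> < top"
    using assms(1,2) unfolding dirichlet_def energy_twice
    by (simp add: ennreal_mult_less_top)
  finally have lt: "?S (\<lambda>v. f v - g v) < top" .
  have "?S (\<lambda>v. f v - g v) / 2 \<noteq> top"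
    using lt by (simp add: ennreal_divide_eq_top_iff)
  then show ?thesis unfolding dirichlet_def energy_def by (simp add: less_top)
qed



lemma geom_inj_bound:
  fixes n :: "'a \<Rightarrow> nat"
  assumes "finite F" "inj_on n F"
  shows "(\<Sum>e\<in>F. (1/4::real)^(n e)) \<le> (\<Sum>j. (1/4::real)^j)"
proof -
  have "(\<Sum>e\<in>F. (1/4::real)^(n e)) = (\<Sum>j\<in>n ` F. (1/4::real)^j)"
    using assms(2) by (simp add: sum.reindex)
  also have "\<dots> \<le> (\<Sum>j. (1/4::real)^j)"
    by (rule sum_le_suminf) (auto intro: summable_geometric simp: assms(1))
  finally show ?thesis .
qed

lemma countable_packing:
  fixes E :: "'v \<Rightarrow> 'v \<Rightarrow> bool" and c :: "'v \<Rightarrow> complex" and r :: "'v \<Rightarrow> real"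
  assumes "circle_packing_disk E c r"
  shows "countable (UNIV :: 'v set)"
proof -
  let ?B = "\<lambda>v::'v. ball (c v) (r v)"
  have rp: "\<And>v. r v > 0" and dj: "\<And>u v. u \<noteq> v \<Longrightarrow> ?B u \<inter> ?B v = {}"
    using assms unfolding circle_packing_disk_def by auto
  have inj: "inj ?B"
  proof (rule injI)
    fix u v assume "?B u = ?B v"
    moreover have "c u \<in> ?B u" using rp[of u] by simp
    ultimately show "u = v" using dj[of u v] by blast
  qed
  have "countable (range ?B)"
  proof (rule countable_disjoint_open_subsets)
    show "pairwise disjnt (range ?B)"
      unfolding pairwise_def disjnt_def
    proof (intro ballI impI)
      fix S T assume "S \<in> range ?B" "T \<in> range ?B" "S \<noteq> T"
      then obtain u v where "S = ?B u" "T = ?B v" "u \<noteq> v" by auto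
      then show "S \<inter> T = {}" using dj by simp
    qed
  qed auto
  then show ?thesis using countable_image_inj_on inj by blast
qed

theorem corollary3p10:
  fixes E :: "'v \<Rightarrow> 'v \<Rightarrow> bool" and C :: "'v \<Rightarrow> 'v \<Rightarrow> real"
    and c :: "'v \<Rightarrow> complex" and r :: "'v \<Rightarrow> real" and b0 :: 'v
    and A :: "complex set" and f :: "'v \<Rightarrow> real"
  assumes "sym_irrefl E" and "three_connected E" and "bounded_degree E"
    and "conductance C E" and "transient C E b0"
    and "circle_packing_disk E c r" and "locally_finite_dual E c"
    and "A \<noteq> {}" and "A \<subseteq> sphere 0 1" and "A \<noteq> sphere 0 1" and "closed A"
    and "f \<in> HD C E" and "f \<in> R_A C E c r b0 A"
  shows "null_family C E {\<gamma>. inf_path E \<gamma> \<and> (\<exists>z\<in>A. (\<lambda>n. dm_bd E c r (\<gamma> n) z) \<longlonglongrightarrow> 0)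
                              \<and> \<not> ((\<lambda>n. f (\<gamma> n)) \<longlonglongrightarrow> 0)}"
proof -
  let ?P = "{(u,v). E u v}"
  have cond: "\<And>u v. E u v \<Longrightarrow> C u v > 0 \<and> C u v = C v u"
    using assms(4) unfolding conductance_def by auto
  have symE: "\<And>u v. E u v \<Longrightarrow> E v u" using assms(1) unfolding sym_irrefl_def by auto
  have fD: "dirichlet C E f" using assms(12) unfolding HD_def by auto
  have "\<forall>k::nat. \<exists>g. dirichlet C E g \<and> away_from E c r A g \<and> dnorm C E b0 (\<lambda>v. f v - g v) < (1/8)^k"
    using assms(13) unfolding R_A_def by auto
  then have "\<exists>G. \<forall>k::nat. dirichlet C E (G k) \<and> away_from E c r A (G k)
        \<and> dnorm C E b0 (\<lambda>v. f v - G k v) < (1/8)^k"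
    by (rule choice)
  then obtain G where G0: "\<forall>k::nat. dirichlet C E (G k) \<and> away_from E c r A (G k)
        \<and> dnorm C E b0 (\<lambda>v. f v - G k v) < (1/8)^k"
    by blast
  have G: "\<And>k. dirichlet C E (G k) \<and> away_from E c r A (G k)
        \<and> dnorm C E b0 (\<lambda>v. f v - G k v) < (1/8)^k"
    using G0 by blast
  define d where "d k v = f v - G k v" for k v
  have dD: "dirichlet C E (d k)" for k
    unfolding d_def using dirichlet_diff[OF fD _ assms(4)] G by blast
  have dbound: "enn2real (energy C E (d k)) < (1/64)^k \<and> \<bar>d k b0\<bar> < (1/8)^k" for k
  proof -
    have s: "sqrt (enn2real (energy C E (d k)) + (d k b0)^2) < (1/8)^k"
      using G[of k] unfolding dnorm_def d_def by auto
    have nn: "0 \<le> enn2real (energy C E (d k))" by simp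
    define X where "X = enn2real (energy C E (d k)) + (d k b0)^2"
    have X0: "0 \<le> X" unfolding X_def using nn by simp
    have "(sqrt X)^2 < ((1/8)^k)^2"
      by (rule power_strict_mono) (use s X0 in \<open>auto simp: X_def\<close>)
    then have "enn2real (energy C E (d k)) + (d k b0)^2 < ((1/8)^k)^2"
      using X0 unfolding X_def by simp
    moreover have "((1/8::real)^k)^2 = (1/64)^k"
    proof -
      have "((1/8::real)^k)^2 = ((1/8)^2)^k" by (simp only: power_mult[symmetric] mult.commute)
      moreover have "(1/8::real)^2 = 1/64" by (simp add: power2_eq_square)
      ultimately show ?thesis by simp
    qed
    ultimately have "enn2real (energy C E (d k)) < (1/64)^k" "(d k b0)^2 < ((1/8)^k)^2"
      using nn zero_le_power2[of "d k b0"] by (linarith)+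
    moreover have "\<bar>d k b0\<bar> < (1/8)^k"
      by (rule power2_less_imp_less) (use \<open>(d k b0)^2 < ((1/8)^k)^2\<close> in auto)
    ultimately show ?thesis by simp
  qed
  define a where "a k u v = 4^k * (C u v * (d k u - d k v)^2)" for k u v
  have a_nn: "E u v \<Longrightarrow> 0 \<le> a k u v" for k u v
    unfolding a_def using cond[of u v] by auto
  have aF: "finite F \<Longrightarrow> F \<subseteq> ?P \<Longrightarrow> (\<Sum>(u,v)\<in>F. a k u v) \<le> 2 * (1/16)^k" for F k
  proof -
    assume F: "finite F" "F \<subseteq> ?P"
    have "(\<Sum>(u,v)\<in>F. a k u v) = 4^k * (\<Sum>(u,v)\<in>F. C u v * (d k u - d k v)^2)"
      unfolding a_def by (simp add: sum_distrib_left case_prod_beta)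
    also have "\<dots> \<le> 4^k * (2 * enn2real (energy C E (d k)))"
      by (rule mult_left_mono[OF finite_energy_bound[OF dD assms(4) F]]) simp
    also have "\<dots> \<le> 4^k * (2 * (1/64)^k)"
      using dbound[of k] by (intro mult_left_mono) auto
    also have "\<dots> = 2 * (4 * (1/64))^k" by (simp only: power_mult_distrib mult.commute mult.left_commute)
    also have "(4 * (1/64::real)) = 1/16" by simp
    finally show ?thesis by simp
  qed
  have a_le: "E u v \<Longrightarrow> a k u v \<le> 2 * (1/16)^k" for k u v
    using aF[of "{(u,v)}" k] by auto
  have summ: "E u v \<Longrightarrow> summable (\<lambda>k. a k u v)" for u v
    by (rule summable_comparison_test'[where g = "\<lambda>k. 2 * (1/16::real)^k"])
       (auto intro: summable_mult summable_geometric simp: a_nn a_le)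
  define Q where "Q u v = (\<Sum>k. a k u v)" for u v
  have Q_ge: "E u v \<Longrightarrow> a k u v \<le> Q u v" for k u v
    unfolding Q_def using sum_le_suminf[OF summ[of u v], of "{k}"] a_nn by auto
  have Q_nn: "E u v \<Longrightarrow> 0 \<le> Q u v" for u v
    using Q_ge[of u v 0] a_nn[of u v 0] by linarith
  have Q_sym: "E u v \<Longrightarrow> Q u v = Q v u" for u v
    unfolding Q_def a_def using cond[of u v] by (simp add: power2_commute)
  define K1 where "K1 = (\<Sum>k. 2 * (1/16::real)^k)"
  have QF: "finite F \<Longrightarrow> F \<subseteq> ?P \<Longrightarrow> (\<Sum>(u,v)\<in>F. Q u v) \<le> K1" for F
  proof -
    assume F: "finite F" "F \<subseteq> ?P"
    have "(\<Sum>(u,v)\<in>F. Q u v) = (\<Sum>e\<in>F. \<Sum>k. a k (fst e) (snd e))"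
      unfolding Q_def by (simp add: case_prod_beta)
    also have "\<dots> = (\<Sum>k. \<Sum>e\<in>F. a k (fst e) (snd e))"
      using F by (intro suminf_sum[symmetric] summ) auto
    also have "\<dots> \<le> K1" unfolding K1_def
    proof (rule suminf_le)
      show "(\<Sum>e\<in>F. a k (fst e) (snd e)) \<le> 2 * (1/16)^k" for k
        using aF[OF F, of k] by (simp add: case_prod_beta)
      show "summable (\<lambda>k. \<Sum>e\<in>F. a k (fst e) (snd e))"
        using F by (intro summable_sum summ) auto
      show "summable (\<lambda>k. 2 * (1/16::real)^k)" by (intro summable_mult summable_geometric) auto
    qed
    finally show ?thesis .
  qed
  have cP: "countable ?P"
  proof -
    have cv: "countable (UNIV :: 'v set)" using countable_packing[OF assms(6)] .
    have "countable ((UNIV :: 'v set) \<times> (UNIV :: 'v set))" using cv by (intro countable_SIGMA) auto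
    then show ?thesis by (rule countable_subset[rotated]) auto
  qed
  define n where "n = to_nat_on ?P"
  have injn: "inj_on n ?P" unfolding n_def using cP by auto
  define H where "H u v = (1/4::real)^(n (u,v)) + (1/4)^(n (v,u))" for u v
  have H_pos: "H u v > 0" for u v unfolding H_def by (intro add_pos_pos zero_less_power) auto
  have H_sym: "H u v = H v u" for u v unfolding H_def by simp
  define K2 where "K2 = 2 * (\<Sum>j. (1/4::real)^j)"
  have HF: "finite F \<Longrightarrow> F \<subseteq> ?P \<Longrightarrow> (\<Sum>(u,v)\<in>F. H u v) \<le> K2" for F
  proof -
    assume F: "finite F" "F \<subseteq> ?P"
    have sF: "prod.swap ` F \<subseteq> ?P" using F symE by auto
    have "(\<Sum>(u,v)\<in>F. H u v) = (\<Sum>e\<in>F. (1/4::real)^(n e)) + (\<Sum>e\<in>F. (1/4::real)^(n (prod.swap e)))"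
      unfolding H_def by (simp add: sum.distrib case_prod_beta prod.swap_def)
    also have "(\<Sum>e\<in>F. (1/4::real)^(n (prod.swap e))) = (\<Sum>e\<in>prod.swap ` F. (1/4::real)^(n e))"
      by (simp add: sum.reindex)
    also have "(\<Sum>e\<in>F. (1/4::real)^(n e)) + (\<Sum>e\<in>prod.swap ` F. (1/4::real)^(n e)) \<le> K2"
      unfolding K2_def
    proof -
      have "(\<Sum>e\<in>F. (1/4::real)^(n e)) \<le> (\<Sum>j. (1/4::real)^j)"
        using F by (intro geom_inj_bound inj_on_subset[OF injn]) auto
      moreover have "(\<Sum>e\<in>prod.swap ` F. (1/4::real)^(n e)) \<le> (\<Sum>j. (1/4::real)^j)"
        using F sF by (intro geom_inj_bound inj_on_subset[OF injn]) auto
      ultimately show "(\<Sum>e\<in>F. (1/4::real)^(n e)) + (\<Sum>e\<in>prod.swap ` F. (1/4::real)^(n e)) \<le> 2 * (\<Sum>j. (1/4::real)^j)"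
        by linarith
    qed
    finally show ?thesis .
  qed
  define q where "q u v = sqrt ((Q u v + H u v) / C u v)" for u v
  have q_pos: "E u v \<Longrightarrow> q u v > 0" for u v
    unfolding q_def using cond[of u v] Q_nn[of u v] H_pos[of u v] by auto
  have q_sym: "E u v \<Longrightarrow> q u v = q v u" for u v
    unfolding q_def using cond[of u v] Q_sym[of u v] H_sym[of u v] by auto
  have Cq: "E u v \<Longrightarrow> C u v * (q u v)^2 = Q u v + H u v" for u v
    unfolding q_def using cond[of u v] Q_nn[of u v] H_pos[of u v] by (auto simp: less_imp_le)
  have dq: "E u v \<Longrightarrow> \<bar>d k u - d k v\<bar> \<le> q u v / 2^k" for k u v
  proof -
    assume uv: "E u v"
    have Cp: "C u v > 0" using cond uv by auto
    have "4^k * (C u v * (d k u - d k v)^2) \<le> Q u v + H u v"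
      using Q_ge[OF uv, of k] H_pos[of u v] unfolding a_def by linarith
    then have "(4^k * (d k u - d k v)^2) * C u v \<le> Q u v + H u v"
      by (simp add: algebra_simps)
    then have i1: "4^k * (d k u - d k v)^2 \<le> (Q u v + H u v) / C u v"
      using Cp by (simp add: pos_le_divide_eq)
    have "(2^k * \<bar>d k u - d k v\<bar>)^2 = ((2::real)^2)^k * (d k u - d k v)^2"
      by (simp only: power_mult_distrib power2_abs power_mult[symmetric] mult.commute)
    then have "(2^k * \<bar>d k u - d k v\<bar>)^2 = 4^k * (d k u - d k v)^2" by simp
    then have "(2^k * \<bar>d k u - d k v\<bar>)^2 \<le> (Q u v + H u v) / C u v" using i1 by simp
    then have "2^k * \<bar>d k u - d k v\<bar> \<le> q u v" unfolding q_def by (rule real_le_rsqrt)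
    then show ?thesis by (simp add: field_simps)
  qed
  show ?thesis unfolding null_family_def
  proof (intro exI conjI ballI allI impI)
    fix u v assume "E u v"
    then show "q u v > 0" "q u v = q v u" using q_pos q_sym by auto
  next
    have "(\<Sum>\<^sub>\<infinity>(u,v)\<in>?P. ennreal (C u v * (q u v)^2)) \<le> ennreal (K1 + K2)"
    proof (rule enn_infsum_le)
      fix F assume F: "finite F" "F \<subseteq> ?P"
      have "(\<Sum>(u,v)\<in>F. ennreal (C u v * (q u v)^2)) = (\<Sum>(u,v)\<in>F. ennreal (Q u v + H u v))"
        using F Cq by (intro sum.cong) auto
      also have "\<dots> = ennreal (\<Sum>(u,v)\<in>F. Q u v + H u v)"
        using F Q_nn H_pos by (subst sum_ennreal[symmetric]) (auto simp: case_prod_beta less_imp_le intro!: add_nonneg_nonneg)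
      also have "\<dots> \<le> ennreal (K1 + K2)"
        using QF[OF F] HF[OF F] by (intro ennreal_leI) (simp add: sum.distrib case_prod_beta)
      finally show "(\<Sum>(u,v)\<in>F. ennreal (C u v * (q u v)^2)) \<le> ennreal (K1 + K2)" .
    qed
    then show "(\<Sum>\<^sub>\<infinity>(u,v)\<in>?P. ennreal (C u v * (q u v)^2)) < top"
      by (rule le_less_trans) simp
  next
    fix \<gamma> assume "\<gamma> \<in> {\<gamma>. inf_path E \<gamma> \<and> (\<exists>z\<in>A. (\<lambda>n. dm_bd E c r (\<gamma> n) z) \<longlonglongrightarrow> 0)
                              \<and> \<not> ((\<lambda>n. f (\<gamma> n)) \<longlonglongrightarrow> 0)}"
    then have ip: "inf_path E \<gamma>" and zA: "\<exists>z\<in>A. (\<lambda>n. dm_bd E c r (\<gamma> n) z) \<longlonglongrightarrow> 0"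
      and nc: "\<not> ((\<lambda>n. f (\<gamma> n)) \<longlonglongrightarrow> 0)" by auto
    have edges: "E (\<gamma> i) (\<gamma> (Suc i))" for i using ip unfolding inf_path_def by auto
    show "\<not> summable (\<lambda>n. q (\<gamma> n) (\<gamma> (Suc n)))"
    proof
      assume sm: "summable (\<lambda>n. q (\<gamma> n) (\<gamma> (Suc n)))"
      define L where "L = (\<Sum>i. q (\<gamma> i) (\<gamma> (Suc i)))"
      have "\<forall>X::'v set. finite X \<and> card X \<le> 2 \<longrightarrow> connected_in E (UNIV - X)"
        using assms(2) unfolding three_connected_def by (rule conjunct2)
      then have "connected_in E (UNIV - {})" by (erule_tac x="{}" in allE) simp
      then obtain p where p: "walk_list E p" "hd p = b0" "last p = \<gamma> 0"
        unfolding connected_in_def by blast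
      define M where "M = (\<Sum>i<length p - 1. q (p!i) (p!Suc i))"
      have pne: "p \<noteq> []" using p unfolding walk_list_def by auto
      have L_nn: "0 \<le> L" unfolding L_def using sm q_pos edges by (intro suminf_nonneg) (auto simp: less_imp_le)
      have M_nn: "0 \<le> M" unfolding M_def using p(1) q_pos unfolding walk_list_def
        by (intro sum_nonneg) (auto simp: less_imp_le)
      have bound: "\<bar>d k (\<gamma> N)\<bar> \<le> (1 + M + L) / 2^k" for k N
      proof -
        have "\<bar>d k (p!(length p - 1)) - d k (p!0)\<bar> \<le> (\<Sum>i<length p - 1. q (p!i) (p!Suc i) / 2^k)"
        proof (rule telescope_bound[where x = "\<lambda>i. p!i" and m = "length p - 1" and d = "d k"])
          fix i assume "i < length p - 1"
          then have "Suc i < length p" by simp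
          then have "E (p!i) (p!Suc i)" using p(1) unfolding walk_list_def by blast
          then have "\<bar>d k (p!i) - d k (p!Suc i)\<bar> \<le> q (p!i) (p!Suc i) / 2^k" by (rule dq)
          then show "\<bar>d k (p!Suc i) - d k (p!i)\<bar> \<le> q (p!i) (p!Suc i) / 2^k"
            by (metis abs_minus_commute)
        qed
        also have "\<dots> = M / 2^k" unfolding M_def by (simp add: sum_divide_distrib)
        finally have h1': "\<bar>d k (p!(length p - 1)) - d k (p!0)\<bar> \<le> M / 2^k" .
        have "p!(length p - 1) = \<gamma> 0" using p(3) pne by (simp add: last_conv_nth)
        moreover have "p!0 = b0" using p(2) pne by (simp add: hd_conv_nth)
        ultimately have h1: "\<bar>d k (\<gamma> 0) - d k b0\<bar> \<le> M / 2^k" using h1' by simp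
        have "\<bar>d k (\<gamma> N) - d k (\<gamma> 0)\<bar> \<le> (\<Sum>i<N. q (\<gamma> i) (\<gamma> (Suc i)) / 2^k)"
        proof (rule telescope_bound[where x = \<gamma> and m = N and d = "d k"])
          fix i assume "i < N"
          have "\<bar>d k (\<gamma> i) - d k (\<gamma> (Suc i))\<bar> \<le> q (\<gamma> i) (\<gamma> (Suc i)) / 2^k" by (rule dq[OF edges])
          then show "\<bar>d k (\<gamma> (Suc i)) - d k (\<gamma> i)\<bar> \<le> q (\<gamma> i) (\<gamma> (Suc i)) / 2^k"
            by (metis abs_minus_commute)
        qed
        also have "\<dots> = (\<Sum>i<N. q (\<gamma> i) (\<gamma> (Suc i))) / 2^k" by (simp add: sum_divide_distrib)
        also have "\<dots> \<le> L / 2^k" unfolding L_def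
          by (intro divide_right_mono sum_le_suminf sm) (auto simp: less_imp_le q_pos edges)
        finally have h2: "\<bar>d k (\<gamma> N) - d k (\<gamma> 0)\<bar> \<le> L / 2^k" .
        have h3: "\<bar>d k b0\<bar> \<le> 1 / 2^k"
        proof -
          have "(1/8::real)^k \<le> (1/2)^k" by (intro power_mono) auto
          then show ?thesis using dbound[of k] by (simp add: power_one_over)
        qed
        have "\<bar>d k (\<gamma> N)\<bar> \<le> 1/2^k + M/2^k + L/2^k" using h1 h2 h3 by linarith
        then show ?thesis by (simp add: add_divide_distrib)
      qed
      have "(\<lambda>N. f (\<gamma> N)) \<longlonglongrightarrow> 0"
      proof (rule LIMSEQ_I)
        fix e :: real assume e: "0 < e"
        obtain k where k: "(1/2::real)^k < e / (1 + M + L)"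
          using real_arch_pow_inv[of "e / (1 + M + L)" "1/2"] e L_nn M_nn by auto
        have kb: "(1 + M + L) / 2^k < e"
          using k L_nn M_nn by (simp add: power_one_over field_simps)
        obtain z where z: "z \<in> A" "(\<lambda>n. dm_bd E c r (\<gamma> n) z) \<longlonglongrightarrow> 0" using zA by blast
        obtain \<epsilon> where eps: "\<epsilon> > 0" "\<And>v. dm_bd E c r v z < ereal \<epsilon> \<Longrightarrow> G k v = 0"
          using G[of k] z(1) unfolding away_from_def by blast
        have "eventually (\<lambda>N. dm_bd E c r (\<gamma> N) z < ereal \<epsilon>) sequentially"
          using order_tendstoD(2)[OF z(2)] eps(1) by auto
        then obtain N0 where N0: "\<And>N. N \<ge> N0 \<Longrightarrow> dm_bd E c r (\<gamma> N) z < ereal \<epsilon>"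
          unfolding eventually_sequentially by blast
        show "\<exists>N0. \<forall>N\<ge>N0. norm (f (\<gamma> N) - 0) < e"
        proof (intro exI allI impI)
          fix N assume "N \<ge> N0"
          then have "G k (\<gamma> N) = 0" using N0 eps by blast
          then have "f (\<gamma> N) = d k (\<gamma> N)" unfolding d_def by simp
          then show "norm (f (\<gamma> N) - 0) < e" using bound[of k N] kb by simp
        qed
      qed
      then show False using nc by simp
    qed
  qed
qed

end
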